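(* Let $P,Q$ be closed wire calculus terms of sort $(k,l)$, $R$ a closed term of sort $(m,n)$, $S$ a closed term of sort $(l,l')$ and $T$ a closed term of sort $(k',k)$, and suppose $P\sim Q$. Then: (i) $P\mathrel{;}S\sim Q\mathrel{;}S$ and $T\mathrel{;}P\sim T\mathrel{;}Q$; (ii) $P\otimes R\sim Q\otimes R$ and $R\otimes P\sim R\otimes Q$; (iii) for prefix strings $u,v$ such that the prefix terms are well-sorted closed terms, $\frac{u}{v}.P\sim\frac{u}{v}.Q$; (iv) $P+R\sim Q+R$ and $R+P\sim R+Q$ (whenever these are well-sorted, i.e. $R$ has sort $(k,l)$).
   Context: Wire calculus. Fix a set $\Sigma$ of signals and a symbol $\iota\notin\Sigma$ ("no signal"); $L=\Sigma\cup\{\iota\}$. Prefix strings are words over the atoms: signal variables $x$, binders $\lambda x$, $\iota$, and constants $\sigma\in\Sigma$. Terms: $P::= Y \mid P\mathrel{;}P\mid P\otimes P\mid \frac{u}{v}.P\mid P+P\mid \mu Y{:}\tau.P$, with $Y$ process variables, $u,v$ prefix strings, $\tau$ a sort $(k,l)$, $k,l\ge0$. In $\frac{u}{v}.P$ the variables $x$ with $\lambda x$ occurring in $uv$ are bound in $P$ (the set $bd$); other variables occurring in $uv$ are free ($fr$). Sorting (context $\Gamma$ of sorted process variables and signal variables): $Y$ has its declared sort; if $P:(k,n)$, $R:(n,l)$ then $P\mathrel{;}R:(k,l)$; if $P:(k,l)$, $Q:(m,n)$ then $P\otimes Q:(k+m,l+n)$; if $P:\tau$ under $\Gamma,Y{:}\tau'$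 then $\mu Y{:}\tau'.P:\tau$; if $|u|=k$, $|v|=l$, $fr\cap bd=\varnothing$, $fr\subseteq\Gamma$ and $P:(k,l)$ under $\Gamma\cup bd$, then $\frac{u}{v}.P:(k,l)$; if $P,Q:\tau$ then $P+Q:\tau$. Only closed terms (sorted in the empty context) are considered; terms are taken up to renaming of bound variables, with no other structural congruence. $\otimes$ binds tighter than $;$. Semantics: transitions $P\xrightarrow[\vec b]{\vec a}Q$ with $\vec a,\vec b\in L^*$ (upper label $\vec a$ of length $k$, lower $\vec b$ of length $l$ for $P:(k,l)$), $\vec\iota$ denoting words of $\iota$'s, generated by the rules: (Refl) $P\xrightarrow[\vec\iota]{\vec\iota}P$; ($\iota$L) from $P\xrightarrow[\vec\iota]{\vec\iota}R$ and $R\xrightarrow[\vec b]{\vec a}Q$ infer $P\xrightarrow[\vec b]{\vec a}Q$; ($\iota$R) from $P\xrightarrow[\vec b]{\vec a}R$ and $R\xrightarrow[\vec\iota]{\vec\iota}Q$ infer $P\xrightarrow[\vec b]{\vec a}Q$; (Cut) from $P\xrightarrow[\vec c]{\vec a}Q$, $R\xrightarrow[\vec b]{\vec c}S$ infer $P\mathrel{;}R\xrightarrow[\vec b]{\vec a}Q\mathrel{;}S$; (Ten) from $P\xrightarrow[\vec b]{\vec a}Q$, $R\xrightarrow[\vec d]{\vec c}S$ infer $P\otimes R\xrightarrow[\vec b\vec d]{\vec a\vec c}Q\otimes S$; (Pref) for every map $\sigma:bd\to L$, $\frac{u}{v}.P\xrightarrow[v|_\sigma]{u|_\sigma}P|_\sigma$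 where $u|_\sigma$ replaces each $\lambda x$ by $\sigma(x)$ and $P|_\sigma$ substitutes $\sigma(x)$ for $x$; (Rec) from $P[\mu Y.P/Y]\xrightarrow[\vec b]{\vec a}Q$ infer $\mu Y.P\xrightarrow[\vec b]{\vec a}Q$; ($+\iota$) from $P\xrightarrow[\vec\iota]{\vec\iota}Q$, $R\xrightarrow[\vec\iota]{\vec\iota}S$ infer $P+R\xrightarrow[\vec\iota]{\vec\iota}Q+S$; ($+$L) from $P\xrightarrow[\vec b]{\vec a}Q$ with $\vec a\vec b$ not consisting only of $\iota$'s infer $P+R\xrightarrow[\vec b]{\vec a}Q$, and symmetrically ($+$R). Bisimilarity: for closed terms $P,Q$ of the same sort, $P\sim Q$ iff there is a relation $S$ on terms containing $(P,Q)$ such that whenever $(P',Q')\in S$ and $P'\xrightarrow[\vec b]{\vec a}P''$ there is $Q''$ with $Q'\xrightarrow[\vec b]{\vec a}Q''$ and $(P'',Q'')\in S$, and symmetrically with the roles of the two sides exchanged. *)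

theory Defs
  imports Main
begin

datatype 's lab = Iota | Sig 's

text \<open>Atoms of prefix strings: signal variables x, binders (lambda x), iota, constants.\<close>
datatype ('s, 'v) atom = AVar 'v | ALam 'v | AIota | AConst 's

type_synonym sort = "nat \<times> nat"

text \<open>Terms; 'v = signal variables, 'y = process variables.\<close>
datatype ('s, 'v, 'y) tm =
    PVar 'y
  | Seq "('s, 'v, 'y) tm" "('s, 'v, 'y) tm"
  | Ten "('s, 'v, 'y) tm" "('s, 'v, 'y) tm"
  | Pre "('s, 'v) atom list" "('s, 'v) atom list" "('s, 'v, 'y) tm"
  | Sum "('s, 'v, 'y) tm" "('s, 'v, 'y) tm"
  | Mu 'y sort "('s, 'v, 'y) tm"

definition bd :: "('s, 'v) atom list \<Rightarrow> ('s, 'v) atom list \<Rightarrow> 'v set" where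
  "bd u v = {x. ALam x \<in> set (u @ v)}"

definition fr :: "('s, 'v) atom list \<Rightarrow> ('s, 'v) atom list \<Rightarrow> 'v set" where
  "fr u v = {x. AVar x \<in> set (u @ v)} - bd u v"

inductive sorted_tm :: "('y \<Rightarrow> sort option) \<Rightarrow> 'v set \<Rightarrow> ('s, 'v, 'y) tm \<Rightarrow> sort \<Rightarrow> bool" where
  s_var: "G Y = Some \<tau> \<Longrightarrow> sorted_tm G V (PVar Y) \<tau>"
| s_seq: "sorted_tm G V P (k, n) \<Longrightarrow> sorted_tm G V R (n, l) \<Longrightarrow> sorted_tm G V (Seq P R) (k, l)"
| s_ten: "sorted_tm G V P (k, l) \<Longrightarrow> sorted_tm G V Q (m, n) \<Longrightarrow>
          sorted_tm G V (Ten P Q) (k + m, l + n)"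
| s_mu: "sorted_tm (G(Y \<mapsto> \<tau>')) V P \<tau> \<Longrightarrow> sorted_tm G V (Mu Y \<tau>' P) \<tau>"
| s_pre: "length u = k \<Longrightarrow> length v = l \<Longrightarrow> fr u v \<inter> bd u v = {} \<Longrightarrow> fr u v \<subseteq> V \<Longrightarrow>
          sorted_tm G (V \<union> bd u v) P (k, l) \<Longrightarrow> sorted_tm G V (Pre u v P) (k, l)"
| s_sum: "sorted_tm G V P \<tau> \<Longrightarrow> sorted_tm G V Q \<tau> \<Longrightarrow> sorted_tm G V (Sum P Q) \<tau>"

definition closed_sorted :: "('s, 'v, 'y) tm \<Rightarrow> sort \<Rightarrow> bool" where
  "closed_sorted P \<tau> = sorted_tm Map.empty {} P \<tau>"

fun atom_lab :: "('v \<Rightarrow> 's lab) \<Rightarrow> ('s, 'v) atom \<Rightarrow> 's lab" where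
  "atom_lab \<sigma> (ALam x) = \<sigma> x"
| "atom_lab \<sigma> (AVar x) = \<sigma> x"
| "atom_lab \<sigma> AIota = Iota"
| "atom_lab \<sigma> (AConst c) = Sig c"

fun lab_atom :: "'s lab \<Rightarrow> ('s, 'v) atom" where
  "lab_atom Iota = AIota"
| "lab_atom (Sig c) = AConst c"

fun atom_subst :: "('v \<Rightarrow> 's lab) \<Rightarrow> 'v set \<Rightarrow> ('s, 'v) atom \<Rightarrow> ('s, 'v) atom" where
  "atom_subst \<sigma> D (AVar x) = (if x \<in> D then lab_atom (\<sigma> x) else AVar x)"
| "atom_subst \<sigma> D a = a"

fun sig_subst :: "('v \<Rightarrow> 's lab) \<Rightarrow> 'v set \<Rightarrow> ('s, 'v, 'y) tm \<Rightarrow> ('s, 'v, 'y) tm" where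
  "sig_subst \<sigma> D (PVar Y) = PVar Y"
| "sig_subst \<sigma> D (Seq P R) = Seq (sig_subst \<sigma> D P) (sig_subst \<sigma> D R)"
| "sig_subst \<sigma> D (Ten P R) = Ten (sig_subst \<sigma> D P) (sig_subst \<sigma> D R)"
| "sig_subst \<sigma> D (Sum P R) = Sum (sig_subst \<sigma> D P) (sig_subst \<sigma> D R)"
| "sig_subst \<sigma> D (Mu Y \<tau> P) = Mu Y \<tau> (sig_subst \<sigma> D P)"
| "sig_subst \<sigma> D (Pre u v P) =
     (let D' = D - bd u v in
      Pre (map (atom_subst \<sigma> D') u) (map (atom_subst \<sigma> D') v) (sig_subst \<sigma> D' P))"

text \<open>Process substitution P[N/Y] (only used with N closed, so no capture can occur).\<close>
fun proc_subst :: "('s, 'v, 'y) tm \<Rightarrow> 'y \<Rightarrow> ('s, 'v, 'y) tm \<Rightarrow> ('s, 'v, 'y) tm" where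
  "proc_subst (PVar Y') Y N = (if Y' = Y then N else PVar Y')"
| "proc_subst (Seq P R) Y N = Seq (proc_subst P Y N) (proc_subst R Y N)"
| "proc_subst (Ten P R) Y N = Ten (proc_subst P Y N) (proc_subst R Y N)"
| "proc_subst (Sum P R) Y N = Sum (proc_subst P Y N) (proc_subst R Y N)"
| "proc_subst (Pre u v P) Y N = Pre u v (proc_subst P Y N)"
| "proc_subst (Mu Y' \<tau> P) Y N = (if Y' = Y then Mu Y' \<tau> P else Mu Y' \<tau> (proc_subst P Y N))"

definition iotas :: "'s lab list \<Rightarrow> bool" where
  "iotas w = (\<forall>a \<in> set w. a = Iota)"

text \<open>trans P a b Q: P goes to Q with upper label a and lower label b.\<close>
inductive trans :: "('s, 'v, 'y) tm \<Rightarrow> 's lab list \<Rightarrow> 's lab list \<Rightarrow> ('s, 'v, 'y) tm \<Rightarrow> bool" where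
  Refl: "closed_sorted P (k, l) \<Longrightarrow> trans P (replicate k Iota) (replicate l Iota) P"
| IotaL: "trans P a b R \<Longrightarrow> iotas a \<Longrightarrow> iotas b \<Longrightarrow> trans R a' b' Q \<Longrightarrow> trans P a' b' Q"
| IotaR: "trans P a b R \<Longrightarrow> trans R a' b' Q \<Longrightarrow> iotas a' \<Longrightarrow> iotas b' \<Longrightarrow> trans P a b Q"
| Cut: "trans P a c Q \<Longrightarrow> trans R c b S \<Longrightarrow> trans (Seq P R) a b (Seq Q S)"
| TenR: "trans P a b Q \<Longrightarrow> trans R c d S \<Longrightarrow> trans (Ten P R) (a @ c) (b @ d) (Ten Q S)"
| Pref: "trans (Pre u v P) (map (atom_lab \<sigma>) u) (map (atom_lab \<sigma>) v) (sig_subst \<sigma> (bd u v) P)"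
| Rec: "trans (proc_subst P Y (Mu Y \<tau> P)) a b Q \<Longrightarrow> trans (Mu Y \<tau> P) a b Q"
| SumIota: "trans P a b Q \<Longrightarrow> trans R a b S \<Longrightarrow> iotas a \<Longrightarrow> iotas b \<Longrightarrow> trans (Sum P R) a b (Sum Q S)"
| SumL: "trans P a b Q \<Longrightarrow> \<not> iotas (a @ b) \<Longrightarrow> trans (Sum P R) a b Q"
| SumR: "trans R a b Q \<Longrightarrow> \<not> iotas (a @ b) \<Longrightarrow> trans (Sum P R) a b Q"

definition bisimulation :: "(('s, 'v, 'y) tm \<times> ('s, 'v, 'y) tm) set \<Rightarrow> bool" where
  "bisimulation S = (\<forall>(P', Q') \<in> S.
      (\<forall>a b P''. trans P' a b P'' \<longrightarrow> (\<exists>Q''. trans Q' a b Q'' \<and> (P'', Q'') \<in> S)) \<and>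
      (\<forall>a b Q''. trans Q' a b Q'' \<longrightarrow> (\<exists>P''. trans P' a b P'' \<and> (P'', Q'') \<in> S)))"

definition bisim :: "('s, 'v, 'y) tm \<Rightarrow> ('s, 'v, 'y) tm \<Rightarrow> bool" (infix "\<approx>" 50) where
  "P \<approx> Q = ((\<exists>\<tau>. closed_sorted P \<tau> \<and> closed_sorted Q \<tau>) \<and>
              (\<exists>S. (P, Q) \<in> S \<and> bisimulation S))"

end

theory Submission
  imports Defs
begin

inductive_cases seqE: "sorted_tm G V (Seq P R) \<tau>"
inductive_cases tenE: "sorted_tm G V (Ten P R) \<tau>"
inductive_cases sumE: "sorted_tm G V (Sum P R) \<tau>"
inductive_cases preE: "sorted_tm G V (Pre u v P) \<tau>"

lemma subst_id: "sorted_tm G V P \<tau> \<Longrightarrow> D \<inter> V = {} \<Longrightarrow> sig_subst \<sigma> D P = P"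
proof (induction arbitrary: D rule: sorted_tm.induct)
  case (s_pre u k v l V G P)
  have A: "\<forall>a\<in>set (u@v). atom_subst \<sigma> (D - bd u v) a = a"
  proof
    fix a assume a: "a \<in> set (u@v)"
    show "atom_subst \<sigma> (D - bd u v) a = a"
    proof (cases a)
      case (AVar x)
      then show ?thesis using a s_pre.hyps(4) s_pre.prems by (auto simp: fr_def bd_def)
    qed auto
  qed
  have "map (atom_subst \<sigma> (D - bd u v)) u = u" using A by (simp add: map_idI)
  moreover have "map (atom_subst \<sigma> (D - bd u v)) v = v" using A by (simp add: map_idI)
  moreover have "sig_subst \<sigma> (D - bd u v) P = P" using s_pre.IH s_pre.prems by blast
  ultimately show ?case by (simp add: Let_def)
qed auto

lemma closed_subst: "closed_sorted P \<tau> \<Longrightarrow> sig_subst \<sigma> D P = P"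
  unfolding closed_sorted_def using subst_id by blast

definition sim_ok :: "(('s,'v,'y) tm \<times> ('s,'v,'y) tm) set \<Rightarrow> bool" where
  "sim_ok R = (\<forall>X X' a b Y. (X,X')\<in>R \<longrightarrow> trans X a b Y \<longrightarrow> (\<exists>Y'. trans X' a b Y' \<and> (Y,Y')\<in>R))"
lemma mk_bisim: assumes "sim_ok R" "sim_ok (R\<inverse>)" "(X,Y)\<in>R" "closed_sorted X \<tau>" "closed_sorted Y \<tau>" shows "X \<approx> Y"
proof -
  have "bisimulation R" unfolding bisimulation_def
  proof (intro ballI, clarify, intro conjI allI impI)
    fix P' Q' a b P'' assume "(P',Q')\<in>R" "trans P' a b P''"
    then show "\<exists>Q''. trans Q' a b Q'' \<and> (P'', Q'') \<in> R" using assms(1) unfolding sim_ok_def by blast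
  next
    fix P' Q' a b Q'' assume "(P',Q')\<in>R" "trans Q' a b Q''"
    then have "(Q',P')\<in>R\<inverse>" by simp
    then show "\<exists>P''. trans P' a b P'' \<and> (P'', Q'') \<in> R" using assms(2) \<open>trans Q' a b Q''\<close> unfolding sim_ok_def by blast
  qed
  then show ?thesis unfolding bisim_def using assms by blast
qed
lemma bisim_conv: "bisimulation B \<Longrightarrow> bisimulation (B\<inverse>)"
  unfolding bisimulation_def by blast

lemma bisim_step: "bisimulation B \<Longrightarrow> (P,Q)\<in>B \<Longrightarrow> trans P a b P' \<Longrightarrow> \<exists>Q'. trans Q a b Q' \<and> (P',Q')\<in>B"
  unfolding bisimulation_def by blast
definition SL where "SL B = {(Seq P S, Seq Q S) | P Q S. (P,Q)\<in>B}"
lemma iotas_rep[simp]: "iotas (replicate k Iota)" by (simp add: iotas_def)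

lemma SL_sim: fixes B :: "((('s,'v,'y) tm \<times> ('s,'v,'y) tm) set)" and X X' Y :: "('s,'v,'y) tm" assumes B: "bisimulation B"
  shows "trans X a b Y \<Longrightarrow> (X,X')\<in>SL B \<Longrightarrow> \<exists>Y'. trans X' a b Y' \<and> (Y,Y')\<in>SL B"
proof (induction arbitrary: X' rule: trans.induct)
  case (Refl P k l)
  then obtain P1 Q1 S1 where e: "P = Seq P1 S1" "X' = Seq Q1 S1" "(P1,Q1)\<in>B" by (auto simp: SL_def)
  from Refl.hyps e obtain n where s1: "closed_sorted P1 (k,n)" "closed_sorted S1 (n,l)"
    by (auto simp: closed_sorted_def elim: seqE)
  from bisim_step[OF B e(3) trans.Refl[OF s1(1)]] obtain Q' where
    q: "trans Q1 (replicate k Iota) (replicate n Iota) Q'" "(P1,Q')\<in>B" by blast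
  have "trans X' (replicate k Iota) (replicate l Iota) (Seq Q' S1)" using e trans.Cut[OF q(1) trans.Refl[OF s1(2)]] by simp
  moreover have "(P, Seq Q' S1) \<in> SL B" using e q by (auto simp: SL_def)
  ultimately show ?case by blast
next
  case (IotaL P a b R a' b' Q)
  from IotaL.IH(1)[OF IotaL.prems] obtain R' where r: "trans X' a b R'" "(R,R')\<in>SL B" by blast
  from IotaL.IH(2)[OF r(2)] obtain Q' where "trans R' a' b' Q'" "(Q,Q')\<in>SL B" by blast
  then show ?case using r IotaL.hyps trans.IotaL by blast
next
  case (IotaR P a b R a' b' Q)
  from IotaR.IH(1)[OF IotaR.prems] obtain R' where r: "trans X' a b R'" "(R,R')\<in>SL B" by blast
  from IotaR.IH(2)[OF r(2)] obtain Q' where "trans R' a' b' Q'" "(Q,Q')\<in>SL B" by blast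
  then show ?case using r IotaR.hyps trans.IotaR by blast
next
  case (Cut P a c Q R b S)
  then obtain Q1 where e: "X' = Seq Q1 R" "(P,Q1)\<in>B" by (auto simp: SL_def)
  from bisim_step[OF B e(2) \<open>trans P a c Q\<close>] obtain Q' where q: "trans Q1 a c Q'" "(Q,Q')\<in>B" by blast
  have "trans X' a b (Seq Q' S)" using e trans.Cut[OF q(1) \<open>trans R c b S\<close>] by simp
  moreover have "(Seq Q S, Seq Q' S) \<in> SL B" using q by (auto simp: SL_def)
  ultimately show ?case by blast
qed (auto simp: SL_def)

definition SR where "SR B = {(Seq T P, Seq T Q) | P Q T. (P,Q)\<in>B}"

lemma SR_sim: fixes B :: "((('s,'v,'y) tm \<times> ('s,'v,'y) tm) set)" and X X' Y :: "('s,'v,'y) tm" assumes B: "bisimulation B"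
  shows "trans X a b Y \<Longrightarrow> (X,X')\<in>SR B \<Longrightarrow> \<exists>Y'. trans X' a b Y' \<and> (Y,Y')\<in>SR B"
proof (induction arbitrary: X' rule: trans.induct)
  case (Refl P k l)
  then obtain P1 Q1 T1 where e: "P = Seq T1 P1" "X' = Seq T1 Q1" "(P1,Q1)\<in>B" by (auto simp: SR_def)
  from Refl.hyps e obtain n where s1: "closed_sorted T1 (k,n)" "closed_sorted P1 (n,l)"
    by (auto simp: closed_sorted_def elim: seqE)
  from bisim_step[OF B e(3) trans.Refl[OF s1(2)]] obtain Q' where
    q: "trans Q1 (replicate n Iota) (replicate l Iota) Q'" "(P1,Q')\<in>B" by blast
  have "trans X' (replicate k Iota) (replicate l Iota) (Seq T1 Q')" using e trans.Cut[OF trans.Refl[OF s1(1)] q(1)] by simp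
  moreover have "(P, Seq T1 Q') \<in> SR B" using e q by (auto simp: SR_def)
  ultimately show ?case by blast
next
  case (IotaL P a b R a' b' Q)
  from IotaL.IH(1)[OF IotaL.prems] obtain R' where r: "trans X' a b R'" "(R,R')\<in>SR B" by blast
  from IotaL.IH(2)[OF r(2)] obtain Q' where "trans R' a' b' Q'" "(Q,Q')\<in>SR B" by blast
  then show ?case using r IotaL.hyps trans.IotaL by blast
next
  case (IotaR P a b R a' b' Q)
  from IotaR.IH(1)[OF IotaR.prems] obtain R' where r: "trans X' a b R'" "(R,R')\<in>SR B" by blast
  from IotaR.IH(2)[OF r(2)] obtain Q' where "trans R' a' b' Q'" "(Q,Q')\<in>SR B" by blast
  then show ?case using r IotaR.hyps trans.IotaR by blast
next
  case (Cut P a c Q R b S)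
  then obtain Q1 where e: "X' = Seq P Q1" "(R,Q1)\<in>B" by (auto simp: SR_def)
  from bisim_step[OF B e(2) \<open>trans R c b S\<close>] obtain Q' where q: "trans Q1 c b Q'" "(S,Q')\<in>B" by blast
  have "trans X' a b (Seq Q Q')" using e trans.Cut[OF \<open>trans P a c Q\<close> q(1)] by simp
  moreover have "(Seq Q S, Seq Q Q') \<in> SR B" using q by (auto simp: SR_def)
  ultimately show ?case by blast
qed (auto simp: SR_def)


definition TL where "TL B = {(Ten P S, Ten Q S) | P Q S. (P,Q)\<in>B}"
definition TR where "TR B = {(Ten T P, Ten T Q) | P Q T. (P,Q)\<in>B}"

lemma TL_sim: fixes B :: "((('s,'v,'y) tm \<times> ('s,'v,'y) tm) set)" and X X' Y :: "('s,'v,'y) tm"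
  assumes B: "bisimulation B"
  shows "trans X a b Y \<Longrightarrow> (X,X')\<in>TL B \<Longrightarrow> \<exists>Y'. trans X' a b Y' \<and> (Y,Y')\<in>TL B"
proof (induction arbitrary: X' rule: trans.induct)
  case (Refl P k l)
  then obtain P1 Q1 S1 where e: "P = Ten P1 S1" "X' = Ten Q1 S1" "(P1,Q1)\<in>B" by (auto simp: TL_def)
  from Refl.hyps e obtain k1 l1 k2 l2 where s1: "closed_sorted P1 (k1,l1)" "closed_sorted S1 (k2,l2)"
    and kl: "k = k1 + k2" "l = l1 + l2"
    by (auto simp: closed_sorted_def elim: tenE)
  from bisim_step[OF B e(3) trans.Refl[OF s1(1)]] obtain Q' where
    q: "trans Q1 (replicate k1 Iota) (replicate l1 Iota) Q'" "(P1,Q')\<in>B" by blast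
  have "trans X' (replicate k1 Iota @ replicate k2 Iota) (replicate l1 Iota @ replicate l2 Iota) (Ten Q' S1)"
    using e trans.TenR[OF q(1) trans.Refl[OF s1(2)]] by simp
  then have "trans X' (replicate k Iota) (replicate l Iota) (Ten Q' S1)" by (simp add: kl replicate_add)
  moreover have "(P, Ten Q' S1) \<in> TL B" using e q by (auto simp: TL_def)
  ultimately show ?case by blast
next
  case (IotaL P a b R a' b' Q)
  from IotaL.IH(1)[OF IotaL.prems] obtain R' where r: "trans X' a b R'" "(R,R')\<in>TL B" by blast
  from IotaL.IH(2)[OF r(2)] obtain Q' where "trans R' a' b' Q'" "(Q,Q')\<in>TL B" by blast
  then show ?case using r IotaL.hyps trans.IotaL by blast
next
  case (IotaR P a b R a' b' Q)
  from IotaR.IH(1)[OF IotaR.prems] obtain R' where r: "trans X' a b R'" "(R,R')\<in>TL B" by blast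
  from IotaR.IH(2)[OF r(2)] obtain Q' where "trans R' a' b' Q'" "(Q,Q')\<in>TL B" by blast
  then show ?case using r IotaR.hyps trans.IotaR by blast
next
  case (TenR P a b Q R c d S)
  then obtain Q1 where e: "X' = Ten Q1 R" "(P,Q1)\<in>B" by (auto simp: TL_def)
  from bisim_step[OF B e(2) \<open>trans P a b Q\<close>] obtain Q' where q: "trans Q1 a b Q'" "(Q,Q')\<in>B" by blast
  have "trans X' (a@c) (b@d) (Ten Q' S)" using e trans.TenR[OF q(1) \<open>trans R c d S\<close>] by simp
  moreover have "(Ten Q S, Ten Q' S) \<in> TL B" using q by (auto simp: TL_def)
  ultimately show ?case by blast
qed (auto simp: TL_def)

lemma TR_sim: fixes B :: "((('s,'v,'y) tm \<times> ('s,'v,'y) tm) set)" and X X' Y :: "('s,'v,'y) tm"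
  assumes B: "bisimulation B"
  shows "trans X a b Y \<Longrightarrow> (X,X')\<in>TR B \<Longrightarrow> \<exists>Y'. trans X' a b Y' \<and> (Y,Y')\<in>TR B"
proof (induction arbitrary: X' rule: trans.induct)
  case (Refl P k l)
  then obtain P1 Q1 S1 where e: "P = Ten S1 P1" "X' = Ten S1 Q1" "(P1,Q1)\<in>B" by (auto simp: TR_def)
  from Refl.hyps e obtain k1 l1 k2 l2 where s1: "closed_sorted S1 (k1,l1)" "closed_sorted P1 (k2,l2)"
    and kl: "k = k1 + k2" "l = l1 + l2"
    by (auto simp: closed_sorted_def elim: tenE)
  from bisim_step[OF B e(3) trans.Refl[OF s1(2)]] obtain Q' where
    q: "trans Q1 (replicate k2 Iota) (replicate l2 Iota) Q'" "(P1,Q')\<in>B" by blast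
  have "trans X' (replicate k1 Iota @ replicate k2 Iota) (replicate l1 Iota @ replicate l2 Iota) (Ten S1 Q')"
    using e trans.TenR[OF trans.Refl[OF s1(1)] q(1)] by simp
  then have "trans X' (replicate k Iota) (replicate l Iota) (Ten S1 Q')" by (simp add: kl replicate_add)
  moreover have "(P, Ten S1 Q') \<in> TR B" using e q by (auto simp: TR_def)
  ultimately show ?case by blast
next
  case (IotaL P a b R a' b' Q)
  from IotaL.IH(1)[OF IotaL.prems] obtain R' where r: "trans X' a b R'" "(R,R')\<in>TR B" by blast
  from IotaL.IH(2)[OF r(2)] obtain Q' where "trans R' a' b' Q'" "(Q,Q')\<in>TR B" by blast
  then show ?case using r IotaL.hyps trans.IotaL by blast
next
  case (IotaR P a b R a' b' Q)
  from IotaR.IH(1)[OF IotaR.prems] obtain R' where r: "trans X' a b R'" "(R,R')\<in>TR B" by blast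
  from IotaR.IH(2)[OF r(2)] obtain Q' where "trans R' a' b' Q'" "(Q,Q')\<in>TR B" by blast
  then show ?case using r IotaR.hyps trans.IotaR by blast
next
  case (TenR P a b Q R c d S)
  then obtain Q1 where e: "X' = Ten P Q1" "(R,Q1)\<in>B" by (auto simp: TR_def)
  from bisim_step[OF B e(2) \<open>trans R c d S\<close>] obtain Q' where q: "trans Q1 c d Q'" "(S,Q')\<in>B" by blast
  have "trans X' (a@c) (b@d) (Ten Q Q')" using e trans.TenR[OF \<open>trans P a b Q\<close> q(1)] by simp
  moreover have "(Ten Q S, Ten Q Q') \<in> TR B" using q by (auto simp: TR_def)
  ultimately show ?case by blast
qed (auto simp: TR_def)


lemma G_sim: "bisimulation B \<Longrightarrow> (X,X') \<in> B \<union> Id \<Longrightarrow> trans X a b Y \<Longrightarrow> \<exists>Y'. trans X' a b Y' \<and> (Y,Y') \<in> B \<union> Id"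
  using bisim_step by blast

definition SmL where "SmL B = {(Sum P R, Sum Q R) | P Q R. (P,Q)\<in>B}"
definition SmR where "SmR B = {(Sum R P, Sum R Q) | P Q R. (P,Q)\<in>B}"

lemma SmL_sim: fixes B :: "((('s,'v,'y) tm \<times> ('s,'v,'y) tm) set)" and X X' Y :: "('s,'v,'y) tm"
  assumes B: "bisimulation B"
  shows "trans X a b Y \<Longrightarrow> (X,X')\<in>SmL B \<Longrightarrow> \<exists>Y'. trans X' a b Y' \<and> (Y,Y')\<in>SmL B \<union> B \<union> Id"
proof (induction arbitrary: X' rule: trans.induct)
  case (Refl P k l)
  then obtain P1 Q1 S1 where e: "P = Sum P1 S1" "X' = Sum Q1 S1" "(P1,Q1)\<in>B" by (auto simp: SmL_def)
  from Refl.hyps e have s1: "closed_sorted P1 (k,l)" "closed_sorted S1 (k,l)"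
    by (auto simp: closed_sorted_def elim: sumE)
  from bisim_step[OF B e(3) trans.Refl[OF s1(1)]] obtain Q' where
    q: "trans Q1 (replicate k Iota) (replicate l Iota) Q'" "(P1,Q')\<in>B" by blast
  have "trans X' (replicate k Iota) (replicate l Iota) (Sum Q' S1)"
    using e trans.SumIota[OF q(1) trans.Refl[OF s1(2)]] by simp
  moreover have "(P, Sum Q' S1) \<in> SmL B" using e q by (auto simp: SmL_def)
  ultimately show ?case by blast
next
  case (IotaL P a b R a' b' Q)
  from IotaL.IH(1)[OF IotaL.prems] obtain R' where r: "trans X' a b R'" "(R,R')\<in>SmL B \<union> B \<union> Id" by blast
  show ?case
  proof (cases "(R,R')\<in>SmL B")
    case True
    from IotaL.IH(2)[OF True] obtain Q' where "trans R' a' b' Q'" "(Q,Q')\<in>SmL B \<union> B \<union> Id" by blast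
    then show ?thesis using r IotaL.hyps trans.IotaL by blast
  next
    case False
    with r have "(R,R') \<in> B \<union> Id" by blast
    from G_sim[OF B this \<open>trans R a' b' Q\<close>] obtain Q' where "trans R' a' b' Q'" "(Q,Q')\<in>B \<union> Id" by blast
    then show ?thesis using r IotaL.hyps trans.IotaL by blast
  qed
next
  case (IotaR P a b R a' b' Q)
  from IotaR.IH(1)[OF IotaR.prems] obtain R' where r: "trans X' a b R'" "(R,R')\<in>SmL B \<union> B \<union> Id" by blast
  show ?case
  proof (cases "(R,R')\<in>SmL B")
    case True
    from IotaR.IH(2)[OF True] obtain Q' where "trans R' a' b' Q'" "(Q,Q')\<in>SmL B \<union> B \<union> Id" by blast
    then show ?thesis using r IotaR.hyps trans.IotaR by blast
  next
    case False
    with r have "(R,R') \<in> B \<union> Id" by blast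
    from G_sim[OF B this \<open>trans R a' b' Q\<close>] obtain Q' where "trans R' a' b' Q'" "(Q,Q')\<in>B \<union> Id" by blast
    then show ?thesis using r IotaR.hyps trans.IotaR by blast
  qed
next
  case (SumIota P a b Q R S)
  then obtain Q1 where e: "X' = Sum Q1 R" "(P,Q1)\<in>B" by (auto simp: SmL_def)
  from bisim_step[OF B e(2) \<open>trans P a b Q\<close>] obtain Q' where q: "trans Q1 a b Q'" "(Q,Q')\<in>B" by blast
  have "trans X' a b (Sum Q' S)" using e trans.SumIota[OF q(1) \<open>trans R a b S\<close>] SumIota.hyps by simp
  moreover have "(Sum Q S, Sum Q' S) \<in> SmL B" using q by (auto simp: SmL_def)
  ultimately show ?case by blast
next
  case (SumL P a b Q R)
  then obtain Q1 where e: "X' = Sum Q1 R" "(P,Q1)\<in>B" by (auto simp: SmL_def)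
  from bisim_step[OF B e(2) \<open>trans P a b Q\<close>] obtain Q' where q: "trans Q1 a b Q'" "(Q,Q')\<in>B" by blast
  have "trans X' a b Q'" using e trans.SumL[OF q(1)] SumL.hyps by simp
  then show ?case using q by blast
next
  case (SumR R a b Q P)
  then obtain Q1 where e: "X' = Sum Q1 R" by (auto simp: SmL_def)
  have "trans X' a b Q" using e trans.SumR[OF \<open>trans R a b Q\<close>] SumR.hyps by simp
  then show ?case by blast
qed (auto simp: SmL_def)

lemma SmR_sim: fixes B :: "((('s,'v,'y) tm \<times> ('s,'v,'y) tm) set)" and X X' Y :: "('s,'v,'y) tm"
  assumes B: "bisimulation B"
  shows "trans X a b Y \<Longrightarrow> (X,X')\<in>SmR B \<Longrightarrow> \<exists>Y'. trans X' a b Y' \<and> (Y,Y')\<in>SmR B \<union> B \<union> Id"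
proof (induction arbitrary: X' rule: trans.induct)
  case (Refl P k l)
  then obtain P1 Q1 S1 where e: "P = Sum S1 P1" "X' = Sum S1 Q1" "(P1,Q1)\<in>B" by (auto simp: SmR_def)
  from Refl.hyps e have s1: "closed_sorted P1 (k,l)" "closed_sorted S1 (k,l)"
    by (auto simp: closed_sorted_def elim: sumE)
  from bisim_step[OF B e(3) trans.Refl[OF s1(1)]] obtain Q' where
    q: "trans Q1 (replicate k Iota) (replicate l Iota) Q'" "(P1,Q')\<in>B" by blast
  have "trans X' (replicate k Iota) (replicate l Iota) (Sum S1 Q')"
    using e trans.SumIota[OF trans.Refl[OF s1(2)] q(1)] by simp
  moreover have "(P, Sum S1 Q') \<in> SmR B" using e q by (auto simp: SmR_def)
  ultimately show ?case by blast
next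
  case (IotaL P a b R a' b' Q)
  from IotaL.IH(1)[OF IotaL.prems] obtain R' where r: "trans X' a b R'" "(R,R')\<in>SmR B \<union> B \<union> Id" by blast
  show ?case
  proof (cases "(R,R')\<in>SmR B")
    case True
    from IotaL.IH(2)[OF True] obtain Q' where "trans R' a' b' Q'" "(Q,Q')\<in>SmR B \<union> B \<union> Id" by blast
    then show ?thesis using r IotaL.hyps trans.IotaL by blast
  next
    case False
    with r have "(R,R') \<in> B \<union> Id" by blast
    from G_sim[OF B this \<open>trans R a' b' Q\<close>] obtain Q' where "trans R' a' b' Q'" "(Q,Q')\<in>B \<union> Id" by blast
    then show ?thesis using r IotaL.hyps trans.IotaL by blast
  qed
next
  case (IotaR P a b R a' b' Q)
  from IotaR.IH(1)[OF IotaR.prems] obtain R' where r: "trans X' a b R'" "(R,R')\<in>SmR B \<union> B \<union> Id" by blast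
  show ?case
  proof (cases "(R,R')\<in>SmR B")
    case True
    from IotaR.IH(2)[OF True] obtain Q' where "trans R' a' b' Q'" "(Q,Q')\<in>SmR B \<union> B \<union> Id" by blast
    then show ?thesis using r IotaR.hyps trans.IotaR by blast
  next
    case False
    with r have "(R,R') \<in> B \<union> Id" by blast
    from G_sim[OF B this \<open>trans R a' b' Q\<close>] obtain Q' where "trans R' a' b' Q'" "(Q,Q')\<in>B \<union> Id" by blast
    then show ?thesis using r IotaR.hyps trans.IotaR by blast
  qed
next
  case (SumIota P a b Q R S)
  then obtain Q1 where e: "X' = Sum P Q1" "(R,Q1)\<in>B" by (auto simp: SmR_def)
  from bisim_step[OF B e(2) \<open>trans R a b S\<close>] obtain Q' where q: "trans Q1 a b Q'" "(S,Q')\<in>B" by blast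
  have "trans X' a b (Sum Q Q')" using e trans.SumIota[OF \<open>trans P a b Q\<close> q(1)] SumIota.hyps by simp
  moreover have "(Sum Q S, Sum Q Q') \<in> SmR B" using q by (auto simp: SmR_def)
  ultimately show ?case by blast
next
  case (SumL P a b Q R)
  then obtain Q1 where e: "X' = Sum P Q1" by (auto simp: SmR_def)
  have "trans X' a b Q" using e trans.SumL[OF \<open>trans P a b Q\<close>] SumL.hyps by simp
  then show ?case by blast
next
  case (SumR R a b Q P)
  then obtain Q1 where e: "X' = Sum P Q1" "(R,Q1)\<in>B" by (auto simp: SmR_def)
  from bisim_step[OF B e(2) \<open>trans R a b Q\<close>] obtain Q' where q: "trans Q1 a b Q'" "(Q,Q')\<in>B" by blast
  have "trans X' a b Q'" using e trans.SumR[OF q(1)] SumR.hyps by simp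
  then show ?case using q by blast
qed (auto simp: SmR_def)


definition PP where "PP u v B = {(Pre u v P, Pre u v Q) | P Q. (P,Q)\<in>B \<and> (\<exists>\<tau>. closed_sorted P \<tau>) \<and> (\<exists>\<tau>. closed_sorted Q \<tau>)
   \<and> closed_sorted (Pre u v P) (length u, length v) \<and> closed_sorted (Pre u v Q) (length u, length v)}"

lemma pre_sort: "closed_sorted (Pre u v P) \<tau> \<Longrightarrow> \<tau> = (length u, length v)"
  unfolding closed_sorted_def by (auto elim: preE)

lemma PP_sim: fixes B :: "((('s,'v,'y) tm \<times> ('s,'v,'y) tm) set)" and X X' Y :: "('s,'v,'y) tm"
  assumes B: "bisimulation B"
  shows "trans X a b Y \<Longrightarrow> (X,X')\<in>PP u0 v0 B \<Longrightarrow> \<exists>Y'. trans X' a b Y' \<and> (Y,Y')\<in>PP u0 v0 B \<union> B"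
proof (induction arbitrary: X' rule: trans.induct)
  case (Refl P k l)
  then obtain Q1 where e: "X' = Pre u0 v0 Q1" "closed_sorted (Pre u0 v0 Q1) (length u0, length v0)" 
    "P = Pre u0 v0 (case P of Pre _ _ P1 \<Rightarrow> P1)" by (auto simp: PP_def)
  with Refl.hyps have "(k,l) = (length u0, length v0)" using pre_sort by metis
  then have "trans X' (replicate k Iota) (replicate l Iota) X'" using e trans.Refl by auto
  then show ?case using Refl.prems by blast
next
  case (IotaL P a b R a' b' Q)
  from IotaL.IH(1)[OF IotaL.prems] obtain R' where r: "trans X' a b R'" "(R,R')\<in>PP u0 v0 B \<union> B" by blast
  show ?case
  proof (cases "(R,R')\<in>PP u0 v0 B")
    case True
    from IotaL.IH(2)[OF True] obtain Q' where "trans R' a' b' Q'" "(Q,Q')\<in>PP u0 v0 B \<union> B" by blast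
    then show ?thesis using r IotaL.hyps trans.IotaL by blast
  next
    case False
    with r have "(R,R') \<in> B" by blast
    from bisim_step[OF B this \<open>trans R a' b' Q\<close>] obtain Q' where "trans R' a' b' Q'" "(Q,Q')\<in>B" by blast
    then show ?thesis using r IotaL.hyps trans.IotaL by blast
  qed
next
  case (IotaR P a b R a' b' Q)
  from IotaR.IH(1)[OF IotaR.prems] obtain R' where r: "trans X' a b R'" "(R,R')\<in>PP u0 v0 B \<union> B" by blast
  show ?case
  proof (cases "(R,R')\<in>PP u0 v0 B")
    case True
    from IotaR.IH(2)[OF True] obtain Q' where "trans R' a' b' Q'" "(Q,Q')\<in>PP u0 v0 B \<union> B" by blast
    then show ?thesis using r IotaR.hyps trans.IotaR by blast
  next
    case False
    with r have "(R,R') \<in> B" by blast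
    from bisim_step[OF B this \<open>trans R a' b' Q\<close>] obtain Q' where "trans R' a' b' Q'" "(Q,Q')\<in>B" by blast
    then show ?thesis using r IotaR.hyps trans.IotaR by blast
  qed
next
  case (Pref u v P \<sigma>)
  then obtain Q1 \<tau>1 \<tau>2 where e: "X' = Pre u v Q1" "(P,Q1)\<in>B" "closed_sorted P \<tau>1" "closed_sorted Q1 \<tau>2"
    by (auto simp: PP_def)
  have "trans X' (map (atom_lab \<sigma>) u) (map (atom_lab \<sigma>) v) (sig_subst \<sigma> (bd u v) Q1)"
    using e trans.Pref by simp
  then show ?case using e closed_subst[OF e(3)] closed_subst[OF e(4)] by auto
qed (auto simp: PP_def)

lemma simok_intro: "(\<And>X X' a b Y. trans X a b Y \<Longrightarrow> (X,X')\<in>R \<Longrightarrow> \<exists>Y'. trans X' a b Y' \<and> (Y,Y')\<in>R) \<Longrightarrow> sim_ok R"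
  unfolding sim_ok_def by blast


lemma SL_ok: "bisimulation B \<Longrightarrow> sim_ok (SL B)" by (rule simok_intro, erule (2) SL_sim)
lemma SR_ok: "bisimulation B \<Longrightarrow> sim_ok (SR B)" by (rule simok_intro, erule (2) SR_sim)
lemma TL_ok: "bisimulation B \<Longrightarrow> sim_ok (TL B)" by (rule simok_intro, erule (2) TL_sim)
lemma TR_ok: "bisimulation B \<Longrightarrow> sim_ok (TR B)" by (rule simok_intro, erule (2) TR_sim)
lemma SmL_ok: assumes B: "bisimulation B" shows "sim_ok (SmL B \<union> B \<union> Id)"
proof (rule simok_intro)
  fix X X' a b Y assume t: "trans X a b Y" and m: "(X,X') \<in> SmL B \<union> B \<union> Id"
  show "\<exists>Y'. trans X' a b Y' \<and> (Y,Y')\<in>SmL B \<union> B \<union> Id"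
  proof (cases "(X,X') \<in> SmL B")
    case True then show ?thesis using SmL_sim[OF B t] by blast
  next
    case False then have "(X,X') \<in> B \<union> Id" using m by blast
    then show ?thesis using G_sim[OF B _ t] by blast
  qed
qed
lemma SmR_ok: assumes B: "bisimulation B" shows "sim_ok (SmR B \<union> B \<union> Id)"
proof (rule simok_intro)
  fix X X' a b Y assume t: "trans X a b Y" and m: "(X,X') \<in> SmR B \<union> B \<union> Id"
  show "\<exists>Y'. trans X' a b Y' \<and> (Y,Y')\<in>SmR B \<union> B \<union> Id"
  proof (cases "(X,X') \<in> SmR B")
    case True then show ?thesis using SmR_sim[OF B t] by blast
  next
    case False then have "(X,X') \<in> B \<union> Id" using m by blast
    then show ?thesis using G_sim[OF B _ t] by blast
  qed
qed
lemma PP_ok: assumes B: "bisimulation B" shows "sim_ok (PP u v B \<union> B)"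
proof (rule simok_intro)
  fix X X' a b Y assume t: "trans X a b Y" and m: "(X,X') \<in> PP u v B \<union> B"
  show "\<exists>Y'. trans X' a b Y' \<and> (Y,Y')\<in>PP u v B \<union> B"
  proof (cases "(X,X') \<in> PP u v B")
    case True then show ?thesis using PP_sim[OF B t] by blast
  next
    case False then have "(X,X') \<in> B" using m by blast
    then show ?thesis using bisim_step[OF B _ t] by blast
  qed
qed

lemma SL_conv: "(SL B)\<inverse> = SL (B\<inverse>)" by (auto simp: SL_def)
lemma SR_conv: "(SR B)\<inverse> = SR (B\<inverse>)" by (auto simp: SR_def)
lemma TL_conv: "(TL B)\<inverse> = TL (B\<inverse>)" by (auto simp: TL_def)
lemma TR_conv: "(TR B)\<inverse> = TR (B\<inverse>)" by (auto simp: TR_def)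
lemma SmL_conv: "(SmL B \<union> B \<union> Id)\<inverse> = SmL (B\<inverse>) \<union> B\<inverse> \<union> Id" by (auto simp: SmL_def)
lemma SmR_conv: "(SmR B \<union> B \<union> Id)\<inverse> = SmR (B\<inverse>) \<union> B\<inverse> \<union> Id" by (auto simp: SmR_def)
lemma PP_conv: "(PP u v B \<union> B)\<inverse> = PP u v (B\<inverse>) \<union> B\<inverse>" by (auto simp: PP_def)

theorem mainTheorem1:
  fixes P Q R S T :: "('s, 'v, 'y) tm"
  assumes "closed_sorted P (k, l)" and "closed_sorted Q (k, l)"
    and "closed_sorted R (m, n)" and "closed_sorted S (l, l')" and "closed_sorted T (k', k)"
    and "P \<approx> Q"
  shows "(Seq P S \<approx> Seq Q S \<and> Seq T P \<approx> Seq T Q)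
       \<and> (Ten P R \<approx> Ten Q R \<and> Ten R P \<approx> Ten R Q)
       \<and> (\<forall>u v. closed_sorted (Pre u v P) (k, l) \<longrightarrow> closed_sorted (Pre u v Q) (k, l)
                 \<longrightarrow> Pre u v P \<approx> Pre u v Q)
       \<and> ((m, n) = (k, l) \<longrightarrow> Sum P R \<approx> Sum Q R \<and> Sum R P \<approx> Sum R Q)"
proof -
  from assms(6) obtain B where PQ: "(P,Q)\<in>B" and B: "bisimulation B" unfolding bisim_def by blast
  have B': "bisimulation (B\<inverse>)" using bisim_conv[OF B] .
  note cs = assms(1-5)[unfolded closed_sorted_def]
  have 1: "Seq P S \<approx> Seq Q S"
    by (rule mk_bisim[OF SL_ok[OF B] _ _ , where \<tau>="(k,l')"], simp add: SL_conv SL_ok[OF B'],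
        use PQ in \<open>auto simp: SL_def closed_sorted_def intro: s_seq cs\<close>)
  have 2: "Seq T P \<approx> Seq T Q"
    by (rule mk_bisim[OF SR_ok[OF B] _ _ , where \<tau>="(k',l)"], simp add: SR_conv SR_ok[OF B'],
        use PQ in \<open>auto simp: SR_def closed_sorted_def intro: s_seq cs\<close>)
  have 3: "Ten P R \<approx> Ten Q R"
    by (rule mk_bisim[OF TL_ok[OF B] _ _ , where \<tau>="(k+m,l+n)"], simp add: TL_conv TL_ok[OF B'],
        use PQ in \<open>auto simp: TL_def closed_sorted_def intro: s_ten cs\<close>)
  have 4: "Ten R P \<approx> Ten R Q"
    by (rule mk_bisim[OF TR_ok[OF B] _ _ , where \<tau>="(m+k,n+l)"], simp add: TR_conv TR_ok[OF B'],
        use PQ in \<open>auto simp: TR_def closed_sorted_def intro: s_ten cs\<close>)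
  have 5: "Pre u v P \<approx> Pre u v Q" if h: "closed_sorted (Pre u v P) (k, l)" "closed_sorted (Pre u v Q) (k, l)" for u v
  proof -
    have kl: "(k,l) = (length u, length v)" using pre_sort[OF h(1)] .
    have "(Pre u v P, Pre u v Q) \<in> PP u v B \<union> B"
      using PQ h assms(1,2) kl unfolding PP_def by auto
    then show ?thesis
      using mk_bisim[OF PP_ok[OF B] _ _ h] PP_ok[OF B'] by (simp add: PP_conv)
  qed
  have 6: "Sum P R \<approx> Sum Q R \<and> Sum R P \<approx> Sum R Q" if mn: "(m, n) = (k, l)"
  proof
    have sR: "closed_sorted R (k,l)" using assms(3) mn by simp
    have "(Sum P R, Sum Q R) \<in> SmL B \<union> B \<union> Id" using PQ by (auto simp: SmL_def)
    moreover have "closed_sorted (Sum P R) (k,l)" "closed_sorted (Sum Q R) (k,l)"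
      using assms(1,2) sR unfolding closed_sorted_def by (auto intro: s_sum)
    ultimately show "Sum P R \<approx> Sum Q R"
      using mk_bisim[OF SmL_ok[OF B]] SmL_ok[OF B'] by (simp add: SmL_conv)
    have "(Sum R P, Sum R Q) \<in> SmR B \<union> B \<union> Id" using PQ by (auto simp: SmR_def)
    moreover have "closed_sorted (Sum R P) (k,l)" "closed_sorted (Sum R Q) (k,l)"
      using assms(1,2) sR unfolding closed_sorted_def by (auto intro: s_sum)
    ultimately show "Sum R P \<approx> Sum R Q"
      using mk_bisim[OF SmR_ok[OF B]] SmR_ok[OF B'] by (simp add: SmR_conv)
  qed
  show ?thesis using 1 2 3 4 5 6 by blast
qed

end
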